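(* Assume $\Phi^{y,\dagger}\in L^1_{\mu_\theta}$ and $\Phi^{y,\mathrm{app}}\in L^1_{\mu_\theta}$. Then $$\max\{d_{\mathrm{KL}}(\mu^{y,\mathrm{app}}_\theta\Vert\mu^{y,\dagger}_\theta),\,d_{\mathrm{KL}}(\mu^{y,\dagger}_\theta\Vert\mu^{y,\mathrm{app}}_\theta)\}\le C\,\Big\|\,|\mathcal{O}\delta^\dagger|^2_{\Sigma_\varepsilon^{-1}}\Big\|_{L^1_{\mu_\theta}}^{1/2},$$ where $C=2^{1/2}\exp\big(2\|\Phi^{y,\dagger}\|_{L^1_{\mu_\theta}}+2\|\Phi^{y,\mathrm{app}}\|_{L^1_{\mu_\theta}}\big)\big(\|\Phi^{y,\dagger}\|^{1/2}_{L^1_{\mu_\theta}}+\|\Phi^{y,\mathrm{app}}\|^{1/2}_{L^1_{\mu_\theta}}\big)$.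
   Context: Let $\Theta$ be a Borel subset of a separable Banach space and $\mu_\theta$ a Borel probability measure on $\Theta$ (the prior). Let $\mathcal{U}$ be a Banach space, $n\in\mathbb{N}$, $\mathcal{O}:\mathcal{U}\to\mathbb{R}^n$ a continuous linear map, and $\mathcal{M}^\dagger,\mathcal{M}:\Theta\to\mathcal{U}$ measurable maps. The model error is $\delta^\dagger:=\mathcal{M}^\dagger-\mathcal{M}$. Let $\Sigma_\varepsilon\in\mathbb{R}^{n\times n}$ be symmetric positive definite and $y\in\mathbb{R}^n$ fixed. For symmetric positive semidefinite $L$, $|a|_L:=(a^\top La)^{1/2}$. Misfits: $\Phi^{y,\dagger}(\theta')=\tfrac12|y-\mathcal{O}\mathcal{M}^\dagger(\theta')|^2_{\Sigma_\varepsilon^{-1}}$, $\Phi^{y,\mathrm{app}}(\theta')=\tfrac12|y-\mathcal{O}\mathcal{M}(\theta')|^2_{\Sigma_\varepsilon^{-1}}$. For a probability measure $\mu$ on a measurable space $E$ and measurable $\Phi:E\to[0,\infty)$, $\mu_\Phi$ denotes the probability measure with $\frac{d\mu_\Phi}{d\mu}=\exp(-\Phi)/\int_E\exp(-\Phi)\,d\mu$. Posteriors: $\mu^{y,\dagger}_\theta:=(\mu_\theta)_{\Phi^{y,\dagger}}$, $\mu^{y,\mathrm{app}}_\theta:=(\mu_\theta)_{\Phi^{y,\mathrm{app}}}$. $d_{\mathrm{KL}}(\mu\Vert\nu)=\int\log\frac{d\mu}{d\nu}\,d\mu$ if $\mu\ll\nu$ and $+\infty$ otherwise. *)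

theory Defs
  imports "HOL-Probability.Probability"
begin

definition wnorm :: "real^'n^'n \<Rightarrow> real^'n \<Rightarrow> real" where
  "wnorm L a = sqrt (a \<bullet> (L *v a))"

definition sym_pos_def_mat :: "real^'n^'n \<Rightarrow> bool" where
  "sym_pos_def_mat S \<longleftrightarrow> transpose S = S \<and> (\<forall>x. x \<noteq> 0 \<longrightarrow> x \<bullet> (S *v x) > 0)"

definition reweight :: "'a measure \<Rightarrow> ('a \<Rightarrow> real) \<Rightarrow> 'a measure" where
  "reweight \<mu> \<Phi> = density \<mu> (\<lambda>x. ennreal (exp (- \<Phi> x) / (\<integral>z. exp (- \<Phi> z) \<partial>\<mu>)))"

text \<open>Kullback-Leibler divergence d_KL(mu || nu) with values in [0,+infinity]:
  the integral of log(dmu/dnu) with respect to mu if mu << nu, and +infinity otherwise.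
  (If mu << nu, the negative part of the integrand is always mu-integrable, so
  non-integrability means the integral is +infinity.)\<close>
definition dKL :: "'a measure \<Rightarrow> 'a measure \<Rightarrow> ereal" where
  "dKL \<mu> \<nu> =
    (if absolutely_continuous \<nu> \<mu> \<and> integrable \<mu> (\<lambda>x. ln (enn2real (RN_deriv \<nu> \<mu> x)))
     then ereal (\<integral>x. ln (enn2real (RN_deriv \<nu> \<mu> x)) \<partial>\<mu>)
     else \<infinity>)"

end

theory Submission
  imports Defs
begin

lemma disc_le:
  fixes a b c :: real
  assumes h: "\<And>t. 0 \<le> a*t^2 + c*t + b" and a: "0 \<le> a" and b: "0 \<le> b"
  shows "c^2 \<le> 4*a*b"
proof (cases "a = 0")
  case True
  have "c = 0"
  proof (rule ccontr)
    assume "c \<noteq> 0"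
    have "0 \<le> a*(-(b+1)/c)^2 + c*(-(b+1)/c) + b" by (rule h)
    with True \<open>c \<noteq> 0\<close> show False by simp
  qed
  then show ?thesis using True by simp
next
  case False
  then have ap: "a > 0" using a by simp
  have "0 \<le> a*(-c/(2*a))^2 + c*(-c/(2*a)) + b" by (rule h)
  also have "a*(-c/(2*a))^2 + c*(-c/(2*a)) + b = b - c^2/(4*a)"
    using ap by (simp add: power2_eq_square field_simps)
  finally have "c^2/(4*a) \<le> b" by simp
  then show ?thesis using ap by (simp add: field_simps)
qed

definition qf :: "real^'n^'n \<Rightarrow> real^'n \<Rightarrow> real" where
  "qf L u = u \<bullet> (L *v u)"

lemma qf_expand: "qf L (t *\<^sub>R u + v) = qf L u * t^2 + (u \<bullet> (L *v v) + v \<bullet> (L *v u)) * t + qf L v"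
  by (simp add: qf_def matrix_vector_right_distrib matrix_vector_mult_scaleR inner_add_left inner_add_right
      power2_eq_square algebra_simps)

lemma qf_cross:
  assumes psd: "\<And>x. 0 \<le> qf L x"
  shows "(u \<bullet> (L *v v) + v \<bullet> (L *v u)) \<le> 2 * sqrt (qf L u) * sqrt (qf L v)"
proof -
  let ?c = "u \<bullet> (L *v v) + v \<bullet> (L *v u)"
  have "?c^2 \<le> 4 * qf L u * qf L v"
  proof (rule disc_le)
    fix t show "0 \<le> qf L u * t^2 + ?c * t + qf L v"
      using psd[of "t *\<^sub>R u + v"] by (simp only: qf_expand)
  qed (rule psd)+
  then have "sqrt (?c^2) \<le> sqrt (4 * qf L u * qf L v)" by (rule real_sqrt_le_mono)
  then have "\<bar>?c\<bar> \<le> 2 * sqrt (qf L u) * sqrt (qf L v)"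
    by (simp add: real_sqrt_mult)
  then show ?thesis by simp
qed

lemma qf_tri:
  assumes psd: "\<And>x. 0 \<le> qf L x"
  shows "sqrt (qf L (u + v)) \<le> sqrt (qf L u) + sqrt (qf L v)"
proof -
  have e: "qf L (u + v) = qf L u + (u \<bullet> (L *v v) + v \<bullet> (L *v u)) + qf L v"
    using qf_expand[of L 1 u v] by simp
  have "qf L (u + v) \<le> (sqrt (qf L u) + sqrt (qf L v))^2"
    unfolding e using qf_cross[OF psd, of u v] psd[of u] psd[of v]
    by (simp add: power2_eq_square algebra_simps)
  then have "sqrt (qf L (u + v)) \<le> sqrt ((sqrt (qf L u) + sqrt (qf L v))^2)"
    by (rule real_sqrt_le_mono)
  then show ?thesis by (metis abs_of_nonneg add_nonneg_nonneg real_sqrt_ge_zero psd real_sqrt_abs)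
qed

lemma qf_neg: "qf L (- u) = qf L u"
  by (simp add: qf_def matrix_vector_mult_scaleR[of L "-1" u, simplified])

lemma qf_diff_bound:
  assumes psd: "\<And>x. 0 \<le> qf L x"
  shows "\<bar>qf L a - qf L b\<bar> \<le> sqrt (qf L (a - b)) * (sqrt (qf L a) + sqrt (qf L b))"
proof -
  have 1: "sqrt (qf L a) \<le> sqrt (qf L b) + sqrt (qf L (a - b))"
    using qf_tri[OF psd, of b "a - b"] by simp
  have 2: "sqrt (qf L b) \<le> sqrt (qf L a) + sqrt (qf L (a - b))"
    using qf_tri[OF psd, of a "b - a"] qf_neg[of L "a - b"] by simp
  have "\<bar>qf L a - qf L b\<bar> = \<bar>sqrt (qf L a) - sqrt (qf L b)\<bar> * (sqrt (qf L a) + sqrt (qf L b))"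
  proof -
    have "qf L a - qf L b = (sqrt (qf L a) - sqrt (qf L b)) * (sqrt (qf L a) + sqrt (qf L b))"
      using psd[of a] psd[of b] by (simp add: algebra_simps real_sqrt_mult_self)
    then show ?thesis using psd[of a] psd[of b] by (simp add: abs_mult)
  qed
  also have "\<dots> \<le> sqrt (qf L (a - b)) * (sqrt (qf L a) + sqrt (qf L b))"
    by (rule mult_right_mono) (use 1 2 psd[of a] psd[of b] in auto)
  finally show ?thesis .
qed

lemma qf_le: 
  assumes psd: "\<And>x. 0 \<le> qf L x"
  shows "qf L (a - b) \<le> 2 * (qf L a + qf L b)"
proof -
  have "sqrt (qf L (a - b)) \<le> sqrt (qf L a) + sqrt (qf L b)"
    using qf_tri[OF psd, of a "- b"] qf_neg[of L b] by simp
  then have "(sqrt (qf L (a - b)))^2 \<le> (sqrt (qf L a) + sqrt (qf L b))^2"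
    by (rule power_mono) (simp add: psd)
  also have "\<dots> \<le> 2 * (qf L a + qf L b)"
    using psd[of a] psd[of b] sum_squares_bound[of "sqrt (qf L a)" "sqrt (qf L b)"]
    by (simp add: power2_eq_square algebra_simps)
  finally have "(sqrt (qf L (a - b)))^2 \<le> 2 * (qf L a + qf L b)" .
  moreover have "0 \<le> qf L (a - b)" by (rule psd)
  ultimately show ?thesis by (simp only: real_sqrt_pow2)
qed

lemma psd_inv:
  assumes "sym_pos_def_mat \<Sigma>"
  shows "0 \<le> qf (matrix_inv \<Sigma>) x"
proof -
  have pd: "\<And>z. z \<noteq> 0 \<Longrightarrow> z \<bullet> (\<Sigma> *v z) > 0" using assms by (simp add: sym_pos_def_mat_def)
  have "\<forall>z. \<Sigma> *v z = 0 \<longrightarrow> z = 0" using pd by fastforce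
  then have "\<exists>B. B ** \<Sigma> = mat 1" by (simp add: matrix_left_invertible_ker)
  then have "invertible \<Sigma>" by (simp add: invertible_left_inverse)
  then have "\<Sigma> ** matrix_inv \<Sigma> = mat 1"
    unfolding invertible_def matrix_inv_def by (rule someI2_ex) auto
  then have e: "\<Sigma> *v (matrix_inv \<Sigma> *v x) = x" by (simp add: matrix_vector_mul_assoc)
  define z where "z = matrix_inv \<Sigma> *v x"
  have "qf (matrix_inv \<Sigma>) x = (\<Sigma> *v z) \<bullet> z" unfolding qf_def z_def e ..
  also have "\<dots> = z \<bullet> (\<Sigma> *v z)" by (simp add: inner_commute)
  also have "\<dots> \<ge> 0" using pd[of z] by (cases "z = 0") auto
  finally show ?thesis .
qed


lemma sqrt_bound_real:
  fixes I A D :: real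
  assumes A: "0 \<le> A" and D: "0 \<le> D" and h: "\<And>l. l > 0 \<Longrightarrow> I \<le> (l*A + D/l)/2"
  shows "I \<le> sqrt A * sqrt D"
proof (cases "A > 0 \<and> D > 0")
  case True
  have "I \<le> ((sqrt D / sqrt A)*A + D/(sqrt D / sqrt A))/2" using True by (intro h) simp
  also have "\<dots> = sqrt A * sqrt D" using True
    by (simp add: field_simps)
  finally show ?thesis .
next
  case False
  then have "A = 0 \<or> D = 0" using A D by auto
  then show ?thesis
  proof
    assume A0: "A = 0"
    show ?thesis
    proof (rule ccontr)
      assume "\<not> ?thesis" then have Ip: "I > 0" using A0 by simp
      have "I \<le> ((D/I+1)*A + D/(D/I+1))/2" using Ip D by (intro h) (simp add: add_nonneg_pos)
      also have "\<dots> = D*I/(2*(D+I))" using A0 Ip D by (simp add: field_simps)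
      also have "\<dots> < I" using Ip D by (auto simp: field_simps intro!: add_nonneg_pos)
      finally show False by simp
    qed
  next
    assume D0: "D = 0"
    show ?thesis
    proof (rule ccontr)
      assume "\<not> ?thesis" then have Ip: "I > 0" using D0 by simp
      have "I \<le> ((I/(A+1))*A + D/(I/(A+1)))/2" using Ip A by (intro h) simp
      also have "\<dots> = I*A/(2*(A+1))" using D0 Ip A by (simp add: field_simps)
      also have "\<dots> < I" using Ip A by (auto simp: field_simps intro!: add_nonneg_pos)
      finally show False by simp
    qed
  qed
qed

lemma amgm_l:
  fixes a b l :: real
  assumes "l > 0"
  shows "a * b \<le> (l * a^2 + b^2 / l) / 2"
proof -
  have "0 \<le> (l*a - b)^2" by simp
  then have "2*l*(a*b) \<le> l^2*a^2 + b^2" by (simp add: power2_diff power_mult_distrib algebra_simps)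
  then show ?thesis using assms by (simp add: field_simps power2_eq_square)
qed

lemma int_sqrt_mult:
  assumes [measurable]: "f \<in> borel_measurable M" "g \<in> borel_measurable M"
    and intf: "integrable M f" and intg: "integrable M g"
    and nf: "\<And>x. 0 \<le> f x" and ng: "\<And>x. 0 \<le> g x"
  shows "integrable M (\<lambda>x. sqrt (f x) * sqrt (g x))"
    and "(\<integral>x. sqrt (f x) * sqrt (g x) \<partial>M) \<le> sqrt (\<integral>x. f x \<partial>M) * sqrt (\<integral>x. g x \<partial>M)"
proof -
  have pt: "sqrt (f x) * sqrt (g x) \<le> (l * f x + g x / l)/2" if "l > 0" for l x
    using amgm_l[OF that, of "sqrt (f x)" "sqrt (g x)"] nf[of x] ng[of x] by simp
  show ii: "integrable M (\<lambda>x. sqrt (f x) * sqrt (g x))"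
  proof (rule Bochner_Integration.integrable_bound[where f="\<lambda>x. (1 * f x + g x / 1)/2"])
    show "integrable M (\<lambda>x. (1 * f x + g x / 1)/2)" using intf intg by auto
    show "AE x in M. norm (sqrt (f x) * sqrt (g x)) \<le> norm ((1 * f x + g x / 1)/2)"
      using pt[of 1] nf ng by (intro AE_I2) auto
  qed simp
  show "(\<integral>x. sqrt (f x) * sqrt (g x) \<partial>M) \<le> sqrt (\<integral>x. f x \<partial>M) * sqrt (\<integral>x. g x \<partial>M)"
  proof (rule sqrt_bound_real)
    show "0 \<le> integral\<^sup>L M f" using nf by simp
    show "0 \<le> integral\<^sup>L M g" using ng by simp
    fix l :: real assume l: "l > 0"
    have "(\<integral>x. sqrt (f x) * sqrt (g x) \<partial>M) \<le> (\<integral>x. (l * f x + g x / l)/2 \<partial>M)"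
      using ii intf intg pt[OF l] by (intro integral_mono) auto
    also have "\<dots> = (l * integral\<^sup>L M f + integral\<^sup>L M g / l)/2"
      using intf intg by simp
    finally show "(\<integral>x. sqrt (f x) * sqrt (g x) \<partial>M) \<le> (l * integral\<^sup>L M f + integral\<^sup>L M g / l)/2" .
  qed
qed

lemma Zlow:
  fixes f :: "'a \<Rightarrow> real"
  assumes P: "prob_space M" and [measurable]: "f \<in> borel_measurable M"
    and nf: "\<And>x. 0 \<le> f x" and intf: "integrable M f"
  shows "integrable M (\<lambda>x. exp (- f x))" and "exp (- (\<integral>x. f x \<partial>M)) \<le> (\<integral>x. exp (- f x) \<partial>M)"
proof -
  interpret prob_space M by (rule P)
  show ie: "integrable M (\<lambda>x. exp (- f x))"
  proof (rule integrable_const_bound[where B=1])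
    have "norm (exp (- f x)) \<le> 1" for x using nf[of x] by simp
    then show "AE x in M. norm (exp (- f x)) \<le> 1" by simp
  qed simp
  define B where "B = (\<integral>x. f x \<partial>M)"
  have pt: "exp (- B) * (1 + B - f x) \<le> exp (- f x)" for x
  proof -
    have "1 + (B - f x) \<le> exp (B - f x)" by (rule exp_ge_add_one_self)
    then have "exp (- B) * (1 + (B - f x)) \<le> exp (- B) * exp (B - f x)" by simp
    also have "\<dots> = exp (- f x)" by (simp flip: exp_add)
    finally show ?thesis by (simp add: add_diff_eq)
  qed
  have "exp (- B) = (\<integral>x. exp (- B) * (1 + B - f x) \<partial>M)"
    using intf by (simp add: B_def prob_space)
  also have "\<dots> \<le> (\<integral>x. exp (- f x) \<partial>M)"
    using pt intf ie by (intro integral_mono) auto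
  finally show "exp (- (\<integral>x. f x \<partial>M)) \<le> (\<integral>x. exp (- f x) \<partial>M)" by (simp add: B_def)
qed


lemma exp_diff_le:
  fixes a b :: real assumes "0 \<le> a"
  shows "exp (- a) - exp (- b) \<le> \<bar>a - b\<bar>"
proof (cases "a \<le> b")
  case True
  have "1 + (a - b) \<le> exp (a - b)" by (rule exp_ge_add_one_self)
  then have "1 - exp (a - b) \<le> b - a" by linarith
  then have "exp (- a) * (1 - exp (a - b)) \<le> exp (- a) * (b - a)" by (intro mult_left_mono) auto
  also have "\<dots> \<le> 1 * (b - a)" using True assms by (intro mult_right_mono) auto
  finally have "exp (- a) - exp (- a) * exp (a - b) \<le> b - a" by (simp add: algebra_simps)
  moreover have "exp (- a) * exp (a - b) = exp (- b)" by (simp flip: exp_add)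
  ultimately show ?thesis using True by simp
next
  case False
  then have "exp (- a) \<le> exp (- b)" by simp
  then show ?thesis using False by linarith
qed

lemma reweight_prob:
  fixes f :: "'a \<Rightarrow> real"
  assumes P: "prob_space M" and [measurable]: "f \<in> borel_measurable M"
    and ie: "integrable M (\<lambda>x. exp (- f x))" and Zp: "0 < (\<integral>x. exp (- f x) \<partial>M)"
  shows "prob_space (reweight M f)"
proof (rule prob_spaceI)
  let ?Z = "\<integral>x. exp (- f x) \<partial>M"
  have "emeasure (reweight M f) (space (reweight M f))
      = (\<integral>\<^sup>+x. ennreal (exp (- f x) / ?Z) * indicator (space M) x \<partial>M)"
    unfolding reweight_def by (simp add: emeasure_density)
  also have "\<dots> = (\<integral>\<^sup>+x. ennreal (exp (- f x) / ?Z) \<partial>M)"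
    by (intro nn_integral_cong) simp
  also have "\<dots> = ennreal (\<integral>x. exp (- f x) / ?Z \<partial>M)"
    using ie Zp by (intro nn_integral_eq_integral) auto
  also have "\<dots> = 1" using Zp by simp
  finally show "emeasure (reweight M f) (space (reweight M f)) = 1" .
qed


lemma KL_bound:
  fixes M :: "'a measure" and f1 f2 g :: "'a \<Rightarrow> real"
  assumes P: "prob_space M"
    and m1[measurable]: "f1 \<in> borel_measurable M" and m2[measurable]: "f2 \<in> borel_measurable M"
    and mg[measurable]: "g \<in> borel_measurable M"
    and n1: "\<And>x. 0 \<le> f1 x" and n2: "\<And>x. 0 \<le> f2 x" and ng: "\<And>x. 0 \<le> g x"
    and i1: "integrable M f1" and i2: "integrable M f2" and ig: "integrable M g"
    and pt: "\<And>x. \<bar>f1 x - f2 x\<bar> \<le> sqrt (g x / 2) * (sqrt (f1 x) + sqrt (f2 x))"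
  shows "dKL (reweight M f2) (reweight M f1)
     \<le> ereal (sqrt 2 * exp (\<integral>x. f2 x \<partial>M) * (sqrt (\<integral>x. f1 x \<partial>M) + sqrt (\<integral>x. f2 x \<partial>M)) * sqrt (\<integral>x. g x \<partial>M))"
proof -
  interpret prob_space M by (rule P)
  define A where "A = (\<integral>x. f1 x \<partial>M)"
  define B where "B = (\<integral>x. f2 x \<partial>M)"
  define D where "D = (\<integral>x. g x \<partial>M)"
  define Z1 where "Z1 = (\<integral>x. exp (- f1 x) \<partial>M)"
  define Z2 where "Z2 = (\<integral>x. exp (- f2 x) \<partial>M)"
  have ie1: "integrable M (\<lambda>x. exp (- f1 x))" and Z1l: "exp (- A) \<le> Z1"
    using Zlow[OF P m1 n1 i1] unfolding A_def Z1_def by auto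
  have ie2: "integrable M (\<lambda>x. exp (- f2 x))" and Z2l: "exp (- B) \<le> Z2"
    using Zlow[OF P m2 n2 i2] unfolding B_def Z2_def by auto
  have Z1p: "Z1 > 0" using Z1l by (metis exp_gt_zero less_le_trans)
  have Z2p: "Z2 > 0" using Z2l by (metis exp_gt_zero less_le_trans)
  define h1 where "h1 x = exp (- f1 x) / Z1" for x
  define h2 where "h2 x = exp (- f2 x) / Z2" for x
  have h1p: "h1 x > 0" for x using Z1p by (simp add: h1_def)
  have h2p: "h2 x > 0" for x using Z2p by (simp add: h2_def)
  have [measurable]: "h1 \<in> borel_measurable M" "h2 \<in> borel_measurable M"
    unfolding h1_def h2_def by measurable
  define \<nu>1 where "\<nu>1 = reweight M f1"
  define \<nu>2 where "\<nu>2 = reweight M f2"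
  have nu1: "\<nu>1 = density M (\<lambda>x. ennreal (h1 x))" by (simp add: \<nu>1_def reweight_def h1_def Z1_def)
  have nu2: "\<nu>2 = density M (\<lambda>x. ennreal (h2 x))" by (simp add: \<nu>2_def reweight_def h2_def Z2_def)
  have sets1: "sets \<nu>1 = sets M" and sets2: "sets \<nu>2 = sets M" by (simp_all add: nu1 nu2)
  define r where "r x = h2 x / h1 x" for x
  have [measurable]: "r \<in> borel_measurable M" unfolding r_def by measurable
  have rm: "(\<lambda>x. ennreal (r x)) \<in> borel_measurable \<nu>1" unfolding nu1 by simp
  have dens: "\<nu>2 = density \<nu>1 (\<lambda>x. ennreal (r x))"
  proof -
    have "density \<nu>1 (\<lambda>x. ennreal (r x)) = density M (\<lambda>x. ennreal (h1 x) * ennreal (r x))"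
      unfolding nu1 by (rule density_density_eq) simp_all
    also have "(\<lambda>x. ennreal (h1 x) * ennreal (r x)) = (\<lambda>x. ennreal (h2 x))"
    proof
      fix x
      have "ennreal (h1 x) * ennreal (r x) = ennreal (h1 x * r x)"
        using ennreal_mult[of "h1 x" "r x"] h1p[of x] h2p[of x] by (simp add: r_def less_imp_le)
      also have "h1 x * r x = h2 x" using h1p[of x] by (simp add: r_def)
      finally show "ennreal (h1 x) * ennreal (r x) = ennreal (h2 x)" .
    qed
    finally show ?thesis by (simp add: nu2)
  qed
  have P1: "prob_space \<nu>1" unfolding \<nu>1_def
    by (rule reweight_prob[OF P m1 ie1]) (use Z1p Z1_def in simp)
  interpret N1: prob_space \<nu>1 by (rule P1)
  have ae1: "AE x in \<nu>1. ennreal (r x) = RN_deriv \<nu>1 \<nu>2 x"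
    by (rule N1.RN_deriv_unique[OF rm dens[symmetric]])
  have ac: "absolutely_continuous \<nu>1 \<nu>2"
    unfolding dens by (rule absolutely_continuousI_density[OF rm])
  have ae2: "AE x in \<nu>2. ennreal (r x) = RN_deriv \<nu>1 \<nu>2 x"
    by (rule absolutely_continuous_AE[OF _ ac ae1]) (simp add: sets1 sets2)
  define c where "c = ln Z1 - ln Z2"
  define L where "L x = f1 x - f2 x + c" for x
  have [measurable]: "L \<in> borel_measurable M" unfolding L_def by measurable
  have lnr: "ln (r x) = L x" for x
  proof -
    have "ln (h1 x) = - f1 x - ln Z1" using Z1p by (simp add: h1_def ln_div)
    moreover have "ln (h2 x) = - f2 x - ln Z2" using Z2p by (simp add: h2_def ln_div)
    ultimately show ?thesis using h1p[of x] h2p[of x] by (simp add: r_def ln_div L_def c_def)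
  qed
  have ae3: "AE x in \<nu>2. ln (enn2real (RN_deriv \<nu>1 \<nu>2 x)) = L x"
    using ae2
  proof (rule AE_mp, intro AE_I2 impI)
    fix x assume "ennreal (r x) = RN_deriv \<nu>1 \<nu>2 x"
    then have "enn2real (RN_deriv \<nu>1 \<nu>2 x) = r x"
      using h1p[of x] h2p[of x] by (metis enn2real_ennreal less_eq_real_def r_def divide_pos_pos)
    then show "ln (enn2real (RN_deriv \<nu>1 \<nu>2 x)) = L x" by (simp add: lnr)
  qed
  have mRN: "(\<lambda>x. ln (enn2real (RN_deriv \<nu>1 \<nu>2 x))) \<in> borel_measurable \<nu>2"
  proof -
    have "(\<lambda>x. ln (enn2real (RN_deriv \<nu>1 \<nu>2 x))) \<in> borel_measurable \<nu>1" by measurable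
    then show ?thesis using measurable_cong_sets[of \<nu>2 \<nu>1 borel borel] sets1 sets2 by simp
  qed
  have mL2: "L \<in> borel_measurable \<nu>2" unfolding nu2 by simp
  have iL: "integrable M L" unfolding L_def using i1 i2 by simp
  have ihL: "integrable M (\<lambda>x. h2 x *\<^sub>R L x)"
  proof (rule Bochner_Integration.integrable_bound[where f="\<lambda>x. (1/Z2) * \<bar>L x\<bar>"])
    show "integrable M (\<lambda>x. (1/Z2) * \<bar>L x\<bar>)" using iL by simp
    have "norm (h2 x *\<^sub>R L x) \<le> norm ((1/Z2) * \<bar>L x\<bar>)" for x
    proof -
      have "h2 x \<le> 1/Z2" using Z2p n2[of x] by (simp add: h2_def divide_right_mono)
      then have "h2 x * \<bar>L x\<bar> \<le> (1/Z2) * \<bar>L x\<bar>" by (rule mult_right_mono) simp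
      then show ?thesis using h2p[of x] Z2p by (simp add: abs_mult)
    qed
    then show "AE x in M. norm (h2 x *\<^sub>R L x) \<le> norm ((1/Z2) * \<bar>L x\<bar>)" by simp
  qed simp
  have iL2: "integrable \<nu>2 L" unfolding nu2
    using ihL h2p by (subst integrable_density) (auto simp: less_imp_le)
  have iRN: "integrable \<nu>2 (\<lambda>x. ln (enn2real (RN_deriv \<nu>1 \<nu>2 x)))"
    using integrable_cong_AE_imp[OF iL2 mRN] ae3 by (simp add: eq_commute)
  have "dKL \<nu>2 \<nu>1 = ereal (\<integral>x. ln (enn2real (RN_deriv \<nu>1 \<nu>2 x)) \<partial>\<nu>2)"
    unfolding dKL_def using ac iRN by simp
  also have "(\<integral>x. ln (enn2real (RN_deriv \<nu>1 \<nu>2 x)) \<partial>\<nu>2) = (\<integral>x. L x \<partial>\<nu>2)"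
    by (rule integral_cong_AE[OF mRN mL2 ae3])
  also have "\<dots> = (\<integral>x. h2 x * L x \<partial>M)"
    unfolding nu2 using h2p by (subst integral_density) (auto simp: less_imp_le)
  finally have kl: "dKL \<nu>2 \<nu>1 = ereal (\<integral>x. h2 x * L x \<partial>M)" .
  have ih2: "integrable M h2" unfolding h2_def using ie2 by simp
  have int_h2: "(\<integral>x. h2 x \<partial>M) = 1" unfolding h2_def using Z2p by (simp add: Z2_def)
  define E where "E = (\<integral>x. \<bar>f1 x - f2 x\<bar> \<partial>M)"
  have iE: "integrable M (\<lambda>x. \<bar>f1 x - f2 x\<bar>)" using i1 i2 by simp
  have step1: "(\<integral>x. h2 x * L x \<partial>M) \<le> E / Z2 + c"
  proof -
    have "(\<integral>x. h2 x * L x \<partial>M) \<le> (\<integral>x. \<bar>f1 x - f2 x\<bar> / Z2 + c * h2 x \<partial>M)"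
    proof (rule integral_mono)
      show "integrable M (\<lambda>x. h2 x * L x)" using ihL by simp
      show "integrable M (\<lambda>x. \<bar>f1 x - f2 x\<bar> / Z2 + c * h2 x)" using iE ih2 by simp
      fix x
      have "h2 x \<le> 1/Z2" using Z2p n2[of x] by (simp add: h2_def divide_right_mono)
      have "h2 x * (f1 x - f2 x) \<le> h2 x * \<bar>f1 x - f2 x\<bar>"
        using h2p[of x] by (intro mult_left_mono) auto
      also have "\<dots> \<le> (1/Z2) * \<bar>f1 x - f2 x\<bar>"
        using \<open>h2 x \<le> 1/Z2\<close> by (intro mult_right_mono) auto
      finally have "h2 x * (f1 x - f2 x) \<le> (1/Z2) * \<bar>f1 x - f2 x\<bar>" .
      then show "h2 x * L x \<le> \<bar>f1 x - f2 x\<bar> / Z2 + c * h2 x"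
        by (simp add: L_def algebra_simps)
    qed
    also have "\<dots> = E / Z2 + c" using iE ih2 int_h2 by (simp add: E_def)
    finally show ?thesis .
  qed
  have step2: "c \<le> E / Z2"
  proof -
    have "c = ln (Z1 / Z2)" using Z1p Z2p by (simp add: c_def ln_div)
    also have "\<dots> \<le> Z1 / Z2 - 1" using Z1p Z2p by (intro ln_le_minus_one) simp
    also have "\<dots> = (Z1 - Z2) / Z2" using Z2p by (simp add: field_simps)
    also have "Z1 - Z2 = (\<integral>x. exp (- f1 x) - exp (- f2 x) \<partial>M)"
      using ie1 ie2 by (simp add: Z1_def Z2_def)
    also have "\<dots> \<le> E" unfolding E_def
      using ie1 ie2 iE exp_diff_le[OF n1] by (intro integral_mono) auto
    finally show ?thesis using Z2p by (simp add: divide_right_mono)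
  qed
  have invZ: "1 / Z2 \<le> exp B"
  proof -
    have "1 / Z2 \<le> 1 / exp (- B)" using Z2l Z2p by (intro divide_left_mono) auto
    moreover have "1 / exp (- B) = exp B" by (simp add: exp_minus divide_inverse)
    ultimately show ?thesis by simp
  qed
  have Eb: "E \<le> (sqrt D * sqrt A + sqrt D * sqrt B) / sqrt 2"
  proof -
    note c1 = int_sqrt_mult[OF mg m1 ig i1 ng n1]
    note c2 = int_sqrt_mult[OF mg m2 ig i2 ng n2]
    have "E \<le> (\<integral>x. (sqrt (g x) * sqrt (f1 x) + sqrt (g x) * sqrt (f2 x)) / sqrt 2 \<partial>M)"
      unfolding E_def
    proof (rule integral_mono)
      show "integrable M (\<lambda>x. (sqrt (g x) * sqrt (f1 x) + sqrt (g x) * sqrt (f2 x)) / sqrt 2)"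
        using c1(1) c2(1) by simp
      fix x show "\<bar>f1 x - f2 x\<bar> \<le> (sqrt (g x) * sqrt (f1 x) + sqrt (g x) * sqrt (f2 x)) / sqrt 2"
        using pt[of x] by (simp add: real_sqrt_divide algebra_simps)
    qed (use iE in simp)
    also have "\<dots> = ((\<integral>x. sqrt (g x) * sqrt (f1 x) \<partial>M) + (\<integral>x. sqrt (g x) * sqrt (f2 x) \<partial>M)) / sqrt 2"
      using c1(1) c2(1) by simp
    also have "\<dots> \<le> (sqrt D * sqrt A + sqrt D * sqrt B) / sqrt 2"
      using c1(2) c2(2) unfolding A_def B_def D_def by (intro divide_right_mono add_mono) auto
    finally show ?thesis .
  qed
  have E0: "0 \<le> E" unfolding E_def by simp
  have A0: "0 \<le> A" unfolding A_def using n1 by simp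
  have B0: "0 \<le> B" unfolding B_def using n2 by simp
  have D0: "0 \<le> D" unfolding D_def using ng by simp
  have "(\<integral>x. h2 x * L x \<partial>M) \<le> 2 * E * (1 / Z2)" using step1 step2 by simp
  also have "\<dots> \<le> 2 * ((sqrt D * sqrt A + sqrt D * sqrt B) / sqrt 2) * exp B"
    using Eb invZ E0 Z2p A0 B0 D0 by (intro mult_mono) auto
  also have "\<dots> = sqrt 2 * exp B * (sqrt A + sqrt B) * sqrt D"
  proof -
    have s: "2 * (Y / sqrt 2) = sqrt 2 * Y" for Y :: real
    proof -
      have "2 * (Y / sqrt 2) = (2 / sqrt 2) * Y" by simp
      also have "2 / sqrt 2 = sqrt (2::real)" by (simp add: real_div_sqrt)
      finally show ?thesis .
    qed
    show ?thesis by (simp only: s) (simp add: algebra_simps)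
  qed
  finally show ?thesis using kl unfolding \<nu>1_def \<nu>2_def A_def B_def D_def by simp
qed


theorem mainTheorem2:
  fixes \<Theta> :: "'b::{banach, second_countable_topology} set"
    and \<mu> :: "'b measure"
    and Obs :: "'u::banach \<Rightarrow> real^'n"
    and Mdag Mapp :: "'b \<Rightarrow> 'u"
    and \<Sigma> :: "real^'n^'n"
    and y :: "real^'n"
    and \<Phi>dag \<Phi>app :: "'b \<Rightarrow> real"
  assumes \<Theta>_borel: "\<Theta> \<in> sets borel"
    and prior: "prob_space \<mu>" "sets \<mu> = sets (restrict_space borel \<Theta>)"
    and Obs_lin: "bounded_linear Obs"
    and Mdag_meas: "Mdag \<in> borel_measurable \<mu>"
    and Mapp_meas: "Mapp \<in> borel_measurable \<mu>"
    and \<Sigma>_spd: "sym_pos_def_mat \<Sigma>"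
    and \<Phi>dag_def: "\<And>t. \<Phi>dag t = 1/2 * (wnorm (matrix_inv \<Sigma>) (y - Obs (Mdag t)))\<^sup>2"
    and \<Phi>app_def: "\<And>t. \<Phi>app t = 1/2 * (wnorm (matrix_inv \<Sigma>) (y - Obs (Mapp t)))\<^sup>2"
    and int_dag: "integrable \<mu> \<Phi>dag"
    and int_app: "integrable \<mu> \<Phi>app"
  shows "max (dKL (reweight \<mu> \<Phi>app) (reweight \<mu> \<Phi>dag))
             (dKL (reweight \<mu> \<Phi>dag) (reweight \<mu> \<Phi>app))
         \<le> ereal (sqrt 2
                  * exp (2 * (\<integral>t. norm (\<Phi>dag t) \<partial>\<mu>) + 2 * (\<integral>t. norm (\<Phi>app t) \<partial>\<mu>))
                  * (sqrt (\<integral>t. norm (\<Phi>dag t) \<partial>\<mu>) + sqrt (\<integral>t. norm (\<Phi>app t) \<partial>\<mu>))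
                  * sqrt (\<integral>t. norm ((wnorm (matrix_inv \<Sigma>) (Obs (Mdag t - Mapp t)))\<^sup>2) \<partial>\<mu>))"
proof -
  define L where "L = matrix_inv \<Sigma>"
  have psd: "\<And>x. 0 \<le> qf L x" unfolding L_def by (rule psd_inv[OF \<Sigma>_spd])
  have wn: "(wnorm L u)\<^sup>2 = qf L u" for u
    using psd[of u] by (simp add: wnorm_def qf_def)
  define a where "a t = y - Obs (Mdag t)" for t
  define b where "b t = y - Obs (Mapp t)" for t
  define g where "g t = (wnorm L (Obs (Mdag t - Mapp t)))\<^sup>2" for t
  have Pd: "\<Phi>dag t = qf L (a t) / 2" for t using \<Phi>dag_def[of t] wn[of "a t"] unfolding L_def a_def by simp
  have Pa: "\<Phi>app t = qf L (b t) / 2" for t using \<Phi>app_def[of t] wn[of "b t"] unfolding L_def b_def by simp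
  have gq: "g t = qf L (a t - b t)" for t
  proof -
    have "Obs (Mdag t - Mapp t) = - (a t - b t)"
      by (simp add: a_def b_def linear_diff[OF bounded_linear.linear[OF Obs_lin]])
    then show ?thesis using qf_neg[of L "a t - b t"] by (simp add: g_def wn)
  qed
  have nd: "0 \<le> \<Phi>dag t" for t using Pd[of t] psd[of "a t"] by simp
  have na: "0 \<le> \<Phi>app t" for t using Pa[of t] psd[of "b t"] by simp
  have ng: "0 \<le> g t" for t using gq[of t] psd[of "a t - b t"] by simp
  have md[measurable]: "\<Phi>dag \<in> borel_measurable \<mu>" using int_dag by simp
  have ma[measurable]: "\<Phi>app \<in> borel_measurable \<mu>" using int_app by simp
  have cO: "Obs \<in> borel_measurable borel"
    by (intro borel_measurable_continuous_onI linear_continuous_on Obs_lin)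
  have cq: "qf L \<in> borel_measurable borel"
    unfolding qf_def
    by (intro borel_measurable_continuous_onI continuous_on_inner continuous_on_id
        linear_continuous_on matrix_vector_mul_bounded_linear)
  have [measurable]: "(\<lambda>t. Obs (Mdag t)) \<in> borel_measurable \<mu>"
    using measurable_compose[OF Mdag_meas cO] by (simp add: comp_def)
  have [measurable]: "(\<lambda>t. Obs (Mapp t)) \<in> borel_measurable \<mu>"
    using measurable_compose[OF Mapp_meas cO] by (simp add: comp_def)
  have mab: "(\<lambda>t. a t - b t) \<in> borel_measurable \<mu>" unfolding a_def b_def by measurable
  have mg[measurable]: "g \<in> borel_measurable \<mu>"
  proof -
    have geq: "g = (\<lambda>t. qf L (a t - b t))" using gq by (intro ext)
    show ?thesis using measurable_compose[OF mab cq] unfolding geq by (simp add: comp_def)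
  qed
  have ig: "integrable \<mu> g"
  proof (rule Bochner_Integration.integrable_bound[where f="\<lambda>t. 4 * (\<Phi>dag t + \<Phi>app t)"])
    show "integrable \<mu> (\<lambda>t. 4 * (\<Phi>dag t + \<Phi>app t))" using int_dag int_app by simp
    have "norm (g t) \<le> norm (4 * (\<Phi>dag t + \<Phi>app t))" for t
      using qf_le[OF psd, of "a t" "b t"] ng[of t] nd[of t] na[of t] by (simp add: gq Pd Pa)
    then show "AE t in \<mu>. norm (g t) \<le> norm (4 * (\<Phi>dag t + \<Phi>app t))" by simp
  qed simp
  have pt: "\<bar>\<Phi>dag t - \<Phi>app t\<bar> \<le> sqrt (g t / 2) * (sqrt (\<Phi>dag t) + sqrt (\<Phi>app t))" for t
  proof -
    have "\<bar>\<Phi>dag t - \<Phi>app t\<bar> = \<bar>qf L (a t) - qf L (b t)\<bar> / 2"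
      unfolding Pd Pa by (subst diff_divide_distrib[symmetric], subst abs_divide) simp
    also have "\<dots> \<le> sqrt (g t) * (sqrt (qf L (a t)) + sqrt (qf L (b t))) / 2"
      using qf_diff_bound[OF psd, of "a t" "b t"] by (simp add: gq)
    also have "\<dots> = sqrt (g t / 2) * (sqrt (\<Phi>dag t) + sqrt (\<Phi>app t))"
      by (simp add: Pd Pa real_sqrt_divide field_simps)
    finally show ?thesis .
  qed
  have pt': "\<bar>\<Phi>app t - \<Phi>dag t\<bar> \<le> sqrt (g t / 2) * (sqrt (\<Phi>app t) + sqrt (\<Phi>dag t))" for t
    using pt[of t] by (simp add: abs_minus_commute add.commute)
  define A where "A = (\<integral>t. \<Phi>dag t \<partial>\<mu>)"
  define B where "B = (\<integral>t. \<Phi>app t \<partial>\<mu>)"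
  define D where "D = (\<integral>t. g t \<partial>\<mu>)"
  have A0: "0 \<le> A" unfolding A_def using nd by simp
  have B0: "0 \<le> B" unfolding B_def using na by simp
  have D0: "0 \<le> D" unfolding D_def using ng by simp
  have k1: "dKL (reweight \<mu> \<Phi>app) (reweight \<mu> \<Phi>dag) \<le> ereal (sqrt 2 * exp B * (sqrt A + sqrt B) * sqrt D)"
    using KL_bound[OF prior(1) md ma mg nd na ng int_dag int_app ig pt] unfolding A_def B_def D_def .
  have k2: "dKL (reweight \<mu> \<Phi>dag) (reweight \<mu> \<Phi>app) \<le> ereal (sqrt 2 * exp A * (sqrt B + sqrt A) * sqrt D)"
    using KL_bound[OF prior(1) ma md mg na nd ng int_app int_dag ig pt'] unfolding A_def B_def D_def .
  define R where "R = sqrt 2 * exp (2 * A + 2 * B) * (sqrt A + sqrt B) * sqrt D"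
  have r1: "sqrt 2 * exp B * (sqrt A + sqrt B) * sqrt D \<le> R"
    unfolding R_def using A0 B0 D0 by (intro mult_right_mono mult_left_mono) auto
  have r2: "sqrt 2 * exp A * (sqrt B + sqrt A) * sqrt D \<le> R"
    unfolding R_def using A0 B0 D0 by (subst add.commute) (intro mult_right_mono mult_left_mono, auto)
  have eqs: "(\<lambda>t. norm (\<Phi>dag t)) = \<Phi>dag" "(\<lambda>t. norm (\<Phi>app t)) = \<Phi>app"
     "(\<lambda>t. norm ((wnorm (matrix_inv \<Sigma>) (Obs (Mdag t - Mapp t)))\<^sup>2)) = g"
    using nd na ng by (auto simp: g_def L_def)
  have "max (dKL (reweight \<mu> \<Phi>app) (reweight \<mu> \<Phi>dag)) (dKL (reweight \<mu> \<Phi>dag) (reweight \<mu> \<Phi>app)) \<le> ereal R"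
    using k1 k2 r1 r2 by (auto intro: order_trans)
  then show ?thesis unfolding eqs R_def A_def B_def D_def .
qed

end
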